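(* Let $\mathcal{A}$ be a finite abelian group and $\mu$ a stationary Markov measure on $\mathcal{A}^{\mathbb{Z}}$ whose transition matrix has all entries nonzero. If $\nu$ is a probability measure on $\mathcal{A}^{\mathbb{Z}}$ absolutely continuous with respect to $\mu$ (not necessarily shift-invariant), then $\nu$ is harmonically mixing.
   Context: Characters of $\mathcal{A}^{\mathbb{Z}}$ are $\chi=\bigotimes_{n\in\mathbb{Z}}\chi_n$ with $\chi_n$ characters of $\mathcal{A}$, all but finitely many trivial; rank$(\chi)$ is the number of nontrivial $\chi_n$. A measure $\mu$ is harmonically mixing if for every $\varepsilon>0$ there is $R$ such that rank$(\chi)>R$ implies $|\int\chi\,d\mu|<\varepsilon$. *)

theory Defs
  imports "HOL-Probability.Probability"
begin

definition shift_space :: "(int \<Rightarrow> 'a) measure" where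
  "shift_space = PiM UNIV (\<lambda>_::int. count_space (UNIV :: 'a set))"

definition character :: "('a::ab_group_add \<Rightarrow> complex) \<Rightarrow> bool" where
  "character ch \<longleftrightarrow> (\<forall>x y. ch (x + y) = ch x * ch y) \<and> (\<forall>x. cmod (ch x) = 1)"

text \<open>A character of A^Z is given by a family c of characters of A,
  c n being the n-th tensor factor; its support is the set of nontrivial factors.\<close>
definition char_support :: "(int \<Rightarrow> 'a \<Rightarrow> complex) \<Rightarrow> int set" where
  "char_support c = {n. c n \<noteq> (\<lambda>_. 1)}"

definition char_rank :: "(int \<Rightarrow> 'a \<Rightarrow> complex) \<Rightarrow> nat" where
  "char_rank c = card (char_support c)"

definition seq_char :: "(int \<Rightarrow> 'a \<Rightarrow> complex) \<Rightarrow> (int \<Rightarrow> 'a) \<Rightarrow> complex" where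
  "seq_char c x = (\<Prod>n\<in>char_support c. c n (x n))"

definition harmonically_mixing :: "(int \<Rightarrow> 'a::ab_group_add) measure \<Rightarrow> bool" where
  "harmonically_mixing \<nu> \<longleftrightarrow>
     (\<forall>\<epsilon>>0. \<exists>R::nat. \<forall>c. (\<forall>n. character (c n)) \<and> finite (char_support c) \<and> char_rank c > R
        \<longrightarrow> cmod (\<integral>x. seq_char c x \<partial>\<nu>) < \<epsilon>)"

definition stationary_markov ::
  "(int \<Rightarrow> 'a::finite) measure \<Rightarrow> ('a \<Rightarrow> real) \<Rightarrow> ('a \<Rightarrow> 'a \<Rightarrow> real) \<Rightarrow> bool" where
  "stationary_markov \<mu> p P \<longleftrightarrow>
     sets \<mu> = sets shift_space \<and> prob_space \<mu> \<and>
     (\<forall>a. p a \<ge> 0) \<and> (\<Sum>a\<in>UNIV. p a) = 1 \<and>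
     (\<forall>a b. P a b \<ge> 0) \<and> (\<forall>a. (\<Sum>b\<in>UNIV. P a b) = 1) \<and>
     (\<forall>b. (\<Sum>a\<in>UNIV. p a * P a b) = p b) \<and>
     (\<forall>(n::int) (m::nat) (w::nat \<Rightarrow> 'a).
        measure \<mu> {x \<in> space \<mu>. \<forall>i\<le>m. x (n + int i) = w i}
          = p (w 0) * (\<Prod>i<m. P (w i) (w (Suc i))))"

end

theory Submission
  imports Defs
begin


lemma sum_PiE_insert:
  fixes F :: "('i \<Rightarrow> 'b) \<Rightarrow> 'c::comm_monoid_add"
  assumes "x \<notin> S" "finite S" "\<And>i. finite (B i)"
  shows "(\<Sum>w\<in>PiE (insert x S) B. F w) = (\<Sum>y\<in>B x. \<Sum>w\<in>PiE S B. F (w(x:=y)))"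
proof -
  have inj: "inj_on (\<lambda>(y, g). g(x := y)) (B x \<times> PiE S B)"
  proof (rule inj_onI, clarify)
    fix y g y' g' assume h: "y \<in> B x" "g \<in> PiE S B" "y' \<in> B x" "g' \<in> PiE S B" "g(x := y) = g'(x := y')"
    have "y = y'" using fun_cong[OF h(5), of x] by simp
    moreover have "g = g'"
    proof
      fix i show "g i = g' i"
        using fun_cong[OF h(5), of i] h(2,4) assms(1) by (cases "i = x") (auto simp: PiE_def extensional_def)
    qed
    ultimately show "y = y' \<and> g = g'" by simp
  qed
  have "(\<Sum>w\<in>PiE (insert x S) B. F w) = (\<Sum>z\<in>B x \<times> PiE S B. F ((\<lambda>(y, g). g(x := y)) z))"
    unfolding PiE_insert_eq by (rule sum.reindex[OF inj, unfolded comp_def])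
  also have "\<dots> = (\<Sum>y\<in>B x. \<Sum>w\<in>PiE S B. F (w(x:=y)))"
    unfolding sum.cartesian_product by (rule sum.cong) auto
  finally show ?thesis .
qed

fun Vf :: "('a::finite \<Rightarrow> real) \<Rightarrow> ('a \<Rightarrow> 'a \<Rightarrow> real) \<Rightarrow> (nat \<Rightarrow> 'a \<Rightarrow> complex) \<Rightarrow> nat \<Rightarrow> 'a \<Rightarrow> complex" where
  "Vf p P d 0 c = complex_of_real (p c) * d 0 c"
| "Vf p P d (Suc T) c = d (Suc T) c * (\<Sum>b\<in>UNIV. Vf p P d T b * complex_of_real (P b c))"

lemma word_sum:
  fixes d :: "nat \<Rightarrow> 'a::finite \<Rightarrow> complex" and g :: "'a \<Rightarrow> complex"
  shows "(\<Sum>w\<in>PiE {..T} (\<lambda>_. UNIV). complex_of_real (p (w 0) * (\<Prod>i<T. P (w i) (w (Suc i)))) * (\<Prod>i\<le>T. d i (w i)) * g (w T))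
     = (\<Sum>c\<in>UNIV. Vf p P d T c * g c)"
proof (induction T arbitrary: g)
  case 0
  have e: "{..0::nat} = insert 0 {}" by auto
  show ?case unfolding e by (subst sum_PiE_insert) auto
next
  case (Suc T)
  define F where "F w = complex_of_real (p (w 0) * (\<Prod>i<T. P (w i) (w (Suc i)))) * (\<Prod>i\<le>T. d i (w i))" for w :: "nat \<Rightarrow> 'a"
  have e: "{..Suc T} = insert (Suc T) {..T}" by auto
  have t: "complex_of_real (p ((w(Suc T := c)) 0) * (\<Prod>i<Suc T. P ((w(Suc T := c)) i) ((w(Suc T := c)) (Suc i))))
        * (\<Prod>i\<le>Suc T. d i ((w(Suc T := c)) i)) * g ((w(Suc T := c)) (Suc T))
      = (d (Suc T) c * g c) * (F w * complex_of_real (P (w T) c))" for w c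
  proof -
    have 1: "(\<Prod>i<T. P ((w(Suc T := c)) i) ((w(Suc T := c)) (Suc i))) = (\<Prod>i<T. P (w i) (w (Suc i)))"
      by (rule prod.cong) auto
    have 2: "(\<Prod>i\<le>T. d i ((w(Suc T := c)) i)) = (\<Prod>i\<le>T. d i (w i))"
      by (rule prod.cong) auto
    show ?thesis unfolding F_def
      by (simp add: prod.lessThan_Suc 1 2)
  qed
  have "(\<Sum>w\<in>PiE {..Suc T} (\<lambda>_. UNIV). complex_of_real (p (w 0) * (\<Prod>i<Suc T. P (w i) (w (Suc i)))) * (\<Prod>i\<le>Suc T. d i (w i)) * g (w (Suc T)))
     = (\<Sum>c\<in>UNIV. \<Sum>w\<in>PiE {..T} (\<lambda>_. UNIV). (d (Suc T) c * g c) * (F w * complex_of_real (P (w T) c)))"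
  proof -
    have s: "(\<Sum>w\<in>PiE {..Suc T} (\<lambda>_. UNIV). G w) = (\<Sum>c\<in>UNIV. \<Sum>w\<in>PiE {..T} (\<lambda>_. UNIV). G (w(Suc T:=c)))"
      for G :: "(nat \<Rightarrow> 'a) \<Rightarrow> complex" unfolding e by (rule sum_PiE_insert) auto
    show ?thesis unfolding s t ..
  qed
  also have "\<dots> = (\<Sum>c\<in>UNIV. (d (Suc T) c * g c) * (\<Sum>w\<in>PiE {..T} (\<lambda>_. UNIV). F w * complex_of_real (P (w T) c)))"
    by (simp add: sum_distrib_left)
  also have "\<dots> = (\<Sum>c\<in>UNIV. (d (Suc T) c * g c) * (\<Sum>b\<in>UNIV. Vf p P d T b * complex_of_real (P b c)))"
    using Suc.IH[of "\<lambda>b. complex_of_real (P b c)" for c] unfolding F_def by simp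
  also have "\<dots> = (\<Sum>c\<in>UNIV. Vf p P d (Suc T) c * g c)"
    by (simp add: algebra_simps)
  finally show ?case .
qed

lemma K_bound:
  fixes e :: "'a::finite \<Rightarrow> complex" and P :: "'a \<Rightarrow> 'a \<Rightarrow> real"
  assumes dl: "\<forall>a b. \<delta> \<le> P a b" and d0: "0 \<le> \<delta>" and rows: "\<forall>a. (\<Sum>b\<in>UNIV. P a b) = 1"
    and eb: "\<forall>b. cmod (e b) \<le> 1" and es: "(\<Sum>b\<in>UNIV. e b) = 0"
  shows "(\<Sum>c\<in>UNIV. cmod (\<Sum>b\<in>UNIV. of_real (P a b) * e b * of_real (P b c))) \<le> 1 - (real CARD('a) * \<delta>)^2"
proof -
  have split: "(\<Sum>b\<in>UNIV. of_real (P a b) * e b * of_real (P b c)) =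
      (\<Sum>b\<in>UNIV. of_real (P a b - \<delta>) * e b * of_real (P b c)) + of_real \<delta> * (\<Sum>b\<in>UNIV. e b * of_real (P b c - \<delta>))" for c
  proof -
    have "(\<Sum>b\<in>UNIV. e b * of_real (P b c - \<delta>)) = (\<Sum>b\<in>UNIV. e b * of_real (P b c)) - of_real \<delta> * (\<Sum>b\<in>UNIV. e b)"
      by (simp add: algebra_simps sum_subtractf sum_distrib_left)
    also have "\<dots> = (\<Sum>b\<in>UNIV. e b * of_real (P b c))" using es by simp
    finally have 1: "(\<Sum>b\<in>UNIV. e b * of_real (P b c - \<delta>)) = (\<Sum>b\<in>UNIV. e b * of_real (P b c))" .
    have 2: "(\<Sum>b\<in>UNIV. of_real (P a b - \<delta>) * e b * of_real (P b c)) = (\<Sum>b\<in>UNIV. of_real (P a b) * e b * of_real (P b c)) - of_real \<delta> * (\<Sum>b\<in>UNIV. e b * of_real (P b c))"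
      by (simp add: algebra_simps sum_subtractf sum_distrib_left)
    show ?thesis unfolding 1 2 by simp
  qed
  have bc: "cmod (\<Sum>b\<in>UNIV. of_real (P a b) * e b * of_real (P b c)) \<le> (\<Sum>b\<in>UNIV. (P a b - \<delta>) * P b c) + \<delta> * (\<Sum>b\<in>UNIV. P b c - \<delta>)" for c
  proof -
    have t1: "cmod (\<Sum>b\<in>UNIV. of_real (P a b - \<delta>) * e b * of_real (P b c)) \<le> (\<Sum>b\<in>UNIV. (P a b - \<delta>) * P b c)"
    proof -
      have "cmod (\<Sum>b\<in>UNIV. of_real (P a b - \<delta>) * e b * of_real (P b c)) \<le> (\<Sum>b\<in>UNIV. cmod (of_real (P a b - \<delta>) * e b * of_real (P b c)))"
        by (rule norm_sum)
      also have "\<dots> \<le> (\<Sum>b\<in>UNIV. (P a b - \<delta>) * P b c)"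
      proof (rule sum_mono)
        fix b
        have "cmod (of_real (P a b - \<delta>) * e b * of_real (P b c)) = (P a b - \<delta>) * cmod (e b) * P b c"
        proof -
          have "0 \<le> P a b - \<delta>" "0 \<le> P b c" using dl d0 order_trans[OF d0] by auto
          thus ?thesis by (simp only: norm_mult norm_of_real abs_of_nonneg)
        qed
        also have "\<dots> \<le> (P a b - \<delta>) * 1 * P b c"
          using dl d0 eb by (intro mult_right_mono mult_left_mono) (auto intro: order_trans[OF d0])
        finally show "cmod (of_real (P a b - \<delta>) * e b * of_real (P b c)) \<le> (P a b - \<delta>) * P b c" by simp
      qed
      finally show ?thesis .
    qed
    have t2: "cmod (of_real \<delta> * (\<Sum>b\<in>UNIV. e b * of_real (P b c - \<delta>))) \<le> \<delta> * (\<Sum>b\<in>UNIV. P b c - \<delta>)"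
    proof -
      have "cmod (\<Sum>b\<in>UNIV. e b * of_real (P b c - \<delta>)) \<le> (\<Sum>b\<in>UNIV. cmod (e b * of_real (P b c - \<delta>)))"
        by (rule norm_sum)
      also have "\<dots> \<le> (\<Sum>b\<in>UNIV. P b c - \<delta>)"
      proof (rule sum_mono)
        fix b
        have "cmod (e b * of_real (P b c - \<delta>)) = cmod (e b) * (P b c - \<delta>)"
        proof -
          have "0 \<le> P b c - \<delta>" using dl by auto
          thus ?thesis by (simp only: norm_mult norm_of_real abs_of_nonneg)
        qed
        also have "\<dots> \<le> 1 * (P b c - \<delta>)"
          using dl eb by (intro mult_right_mono) auto
        finally show "cmod (e b * of_real (P b c - \<delta>)) \<le> P b c - \<delta>" by simp
      qed
      finally show ?thesis using d0 by (simp add: norm_mult mult_left_mono)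
    qed
    show ?thesis unfolding split by (rule norm_triangle_le) (use t1 t2 in linarith)
  qed
  have "(\<Sum>c\<in>UNIV. cmod (\<Sum>b\<in>UNIV. of_real (P a b) * e b * of_real (P b c)))
      \<le> (\<Sum>c\<in>UNIV. (\<Sum>b\<in>UNIV. (P a b - \<delta>) * P b c) + \<delta> * (\<Sum>b\<in>UNIV. P b c - \<delta>))"
    by (rule sum_mono) (rule bc)
  also have "\<dots> = (\<Sum>b\<in>UNIV. (P a b - \<delta>) * (\<Sum>c\<in>UNIV. P b c)) + \<delta> * (\<Sum>b\<in>UNIV. (\<Sum>c\<in>UNIV. P b c) - real CARD('a) * \<delta>)"
  proof -
    have 1: "(\<Sum>c\<in>UNIV. \<Sum>b\<in>UNIV. (P a b - \<delta>) * P b c) = (\<Sum>b\<in>UNIV. (P a b - \<delta>) * (\<Sum>c\<in>UNIV. P b c))"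
      by (subst sum.swap) (simp add: sum_distrib_left)
    have 2: "(\<Sum>c\<in>UNIV. \<delta> * (\<Sum>b\<in>UNIV. P b c - \<delta>)) = \<delta> * (\<Sum>b\<in>UNIV. \<Sum>c\<in>UNIV. P b c - \<delta>)"
      by (subst sum.swap) (simp add: sum_distrib_left)
    have 3: "(\<Sum>c\<in>UNIV. P b c - \<delta>) = (\<Sum>c\<in>UNIV. P b c) - real CARD('a) * \<delta>" for b
      by (simp add: sum_subtractf)
    show ?thesis unfolding sum.distrib 1 2 3 ..
  qed
  also have "\<dots> = (1 - real CARD('a) * \<delta>) + \<delta> * (real CARD('a) * (1 - real CARD('a) * \<delta>))"
    using rows by (simp add: sum_subtractf)
  also have "\<dots> = 1 - (real CARD('a) * \<delta>)^2"
    by (simp add: algebra_simps power2_eq_square)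
  finally show ?thesis .
qed

lemma norm_step:
  fixes d :: "nat \<Rightarrow> 'a::finite \<Rightarrow> complex"
  assumes Pn: "\<forall>a b. 0 \<le> P a b" and rows: "\<forall>a. (\<Sum>b\<in>UNIV. P a b) = 1"
    and db: "\<forall>b. cmod (d (Suc T) b) \<le> 1"
  shows "(\<Sum>c\<in>UNIV. cmod (Vf p P d (Suc T) c)) \<le> (\<Sum>b\<in>UNIV. cmod (Vf p P d T b))"
proof -
  have "cmod (Vf p P d (Suc T) c) \<le> (\<Sum>b\<in>UNIV. cmod (Vf p P d T b) * P b c)" for c
  proof -
    have "cmod (Vf p P d (Suc T) c) = cmod (d (Suc T) c) * cmod (\<Sum>b\<in>UNIV. Vf p P d T b * complex_of_real (P b c))"
      by (simp add: norm_mult)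
    also have "\<dots> \<le> 1 * cmod (\<Sum>b\<in>UNIV. Vf p P d T b * complex_of_real (P b c))"
      using db by (intro mult_right_mono) auto
    also have "\<dots> \<le> (\<Sum>b\<in>UNIV. cmod (Vf p P d T b * complex_of_real (P b c)))"
      using norm_sum by simp
    also have "\<dots> = (\<Sum>b\<in>UNIV. cmod (Vf p P d T b) * P b c)"
      using Pn by (simp add: norm_mult)
    finally show ?thesis .
  qed
  hence "(\<Sum>c\<in>UNIV. cmod (Vf p P d (Suc T) c)) \<le> (\<Sum>c\<in>UNIV. \<Sum>b\<in>UNIV. cmod (Vf p P d T b) * P b c)"
    by (rule sum_mono)
  also have "\<dots> = (\<Sum>b\<in>UNIV. cmod (Vf p P d T b) * (\<Sum>c\<in>UNIV. P b c))"
    by (subst sum.swap) (simp add: sum_distrib_left)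
  also have "\<dots> = (\<Sum>b\<in>UNIV. cmod (Vf p P d T b))" using rows by simp
  finally show ?thesis .
qed

lemma norm_two:
  fixes d :: "nat \<Rightarrow> 'a::finite \<Rightarrow> complex"
  assumes Pn: "\<forall>a b. 0 \<le> P a b" and rows: "\<forall>a. (\<Sum>b\<in>UNIV. P a b) = 1"
    and dl: "\<forall>a b. \<delta> \<le> P a b" and d0: "0 \<le> \<delta>"
    and db1: "\<forall>b. cmod (d (Suc T) b) \<le> 1" and db2: "\<forall>b. cmod (d (Suc (Suc T)) b) \<le> 1"
    and ds: "(\<Sum>b\<in>UNIV. d (Suc T) b) = 0"
  shows "(\<Sum>c\<in>UNIV. cmod (Vf p P d (Suc (Suc T)) c)) \<le> (1 - (real CARD('a) * \<delta>)^2) * (\<Sum>a\<in>UNIV. cmod (Vf p P d T a))"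
proof -
  define K where "K a c = (\<Sum>b\<in>UNIV. of_real (P a b) * d (Suc T) b * of_real (P b c))" for a c
  have Kb: "(\<Sum>c\<in>UNIV. cmod (K a c)) \<le> 1 - (real CARD('a) * \<delta>)^2" for a
    unfolding K_def by (rule K_bound[OF dl d0 rows db1 ds])
  have eq: "Vf p P d (Suc (Suc T)) c = d (Suc (Suc T)) c * (\<Sum>a\<in>UNIV. Vf p P d T a * K a c)" for c
  proof -
    have "(\<Sum>b\<in>UNIV. d (Suc T) b * (\<Sum>a\<in>UNIV. Vf p P d T a * of_real (P a b)) * of_real (P b c))
       = (\<Sum>b\<in>UNIV. \<Sum>a\<in>UNIV. Vf p P d T a * (of_real (P a b) * d (Suc T) b * of_real (P b c)))"
      by (simp add: sum_distrib_left sum_distrib_right algebra_simps)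
    also have "\<dots> = (\<Sum>a\<in>UNIV. Vf p P d T a * K a c)"
      unfolding K_def by (subst sum.swap) (simp add: sum_distrib_left)
    finally show ?thesis by simp
  qed
  have "cmod (Vf p P d (Suc (Suc T)) c) \<le> (\<Sum>a\<in>UNIV. cmod (Vf p P d T a) * cmod (K a c))" for c
  proof -
    have "cmod (Vf p P d (Suc (Suc T)) c) = cmod (d (Suc (Suc T)) c) * cmod (\<Sum>a\<in>UNIV. Vf p P d T a * K a c)"
      unfolding eq by (simp add: norm_mult)
    also have "\<dots> \<le> 1 * cmod (\<Sum>a\<in>UNIV. Vf p P d T a * K a c)"
      using db2 by (intro mult_right_mono) auto
    also have "\<dots> \<le> (\<Sum>a\<in>UNIV. cmod (Vf p P d T a * K a c))"
      using norm_sum by simp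
    also have "\<dots> = (\<Sum>a\<in>UNIV. cmod (Vf p P d T a) * cmod (K a c))"
      by (simp add: norm_mult)
    finally show ?thesis .
  qed
  hence "(\<Sum>c\<in>UNIV. cmod (Vf p P d (Suc (Suc T)) c)) \<le> (\<Sum>c\<in>UNIV. \<Sum>a\<in>UNIV. cmod (Vf p P d T a) * cmod (K a c))"
    by (rule sum_mono)
  also have "\<dots> = (\<Sum>a\<in>UNIV. cmod (Vf p P d T a) * (\<Sum>c\<in>UNIV. cmod (K a c)))"
    by (subst sum.swap) (simp add: sum_distrib_left)
  also have "\<dots> \<le> (\<Sum>a\<in>UNIV. cmod (Vf p P d T a) * (1 - (real CARD('a) * \<delta>)^2))"
    by (intro sum_mono mult_left_mono Kb) auto
  also have "\<dots> = (1 - (real CARD('a) * \<delta>)^2) * (\<Sum>a\<in>UNIV. cmod (Vf p P d T a))"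
    by (simp add: sum_distrib_right mult.commute)
  finally show ?thesis .
qed

lemma norm_iter:
  fixes d :: "nat \<Rightarrow> 'a::finite \<Rightarrow> complex"
  assumes Pn: "\<forall>a b. 0 \<le> P a b" and rows: "\<forall>a. (\<Sum>b\<in>UNIV. P a b) = 1"
    and dl: "\<forall>a b. \<delta> \<le> P a b" and d0: "0 \<le> \<delta>"
    and pn: "\<forall>a. 0 \<le> p a" and ps: "(\<Sum>a\<in>UNIV. p a) = 1"
    and db: "\<forall>i b. cmod (d i b) \<le> 1"
  shows "(\<Sum>c\<in>UNIV. cmod (Vf p P d T c)) \<le> (1 - (real CARD('a) * \<delta>)^2) ^ (card {i. 0 < i \<and> i < T \<and> (\<Sum>b\<in>UNIV. d i b) = 0} div 2)"
proof (induction T rule: less_induct)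
  case (less T)
  define \<rho> where "\<rho> = 1 - (real CARD('a) * \<delta>)^2"
  define k where "k T = card {i. 0 < i \<and> i < T \<and> (\<Sum>b\<in>UNIV. d i b) = 0}" for T
  have fin: "finite {i. 0 < i \<and> i < T \<and> (\<Sum>b\<in>UNIV. d i b) = 0}" for T
    by (rule finite_subset[of _ "{..<T}"]) auto
  have Nd: "real CARD('a) * \<delta> \<le> 1"
  proof -
    have "real CARD('a) * \<delta> = (\<Sum>b\<in>(UNIV::'a set). \<delta>)" by simp
    also have "\<dots> \<le> (\<Sum>b\<in>UNIV. P undefined b)" using dl by (intro sum_mono) auto
    finally show ?thesis using rows by simp
  qed
  have r0: "0 \<le> \<rho>" unfolding \<rho>_def using Nd d0
    by (simp add: power2_eq_square) (metis mult_le_one of_nat_0_le_iff zero_le_mult_iff)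
  have r1: "\<rho> \<le> 1" unfolding \<rho>_def by simp
  have base: "(\<Sum>c\<in>UNIV. cmod (Vf p P d 0 c)) \<le> 1"
  proof -
    have "(\<Sum>c\<in>UNIV. cmod (Vf p P d 0 c)) \<le> (\<Sum>c\<in>UNIV. p c)"
    proof (rule sum_mono)
      fix c
      have "cmod (Vf p P d 0 c) = p c * cmod (d 0 c)" using pn by (simp add: norm_mult)
      also have "\<dots> \<le> p c * 1" using pn db by (intro mult_left_mono) auto
      finally show "cmod (Vf p P d 0 c) \<le> p c" by simp
    qed
    thus ?thesis using ps by simp
  qed
  show ?case
  proof (cases T)
    case 0
    thus ?thesis using base by simp
  next
    case (Suc T1)
    note T1 = Suc
    show ?thesis
    proof (cases T1)
      case 0
      have h: "(\<Sum>c\<in>UNIV. cmod (Vf p P d T c)) \<le> 1"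
        using norm_step[OF Pn rows, of d 0 p] db base T1 0 by simp
      have e: "{i. 0 < i \<and> i < T \<and> (\<Sum>b\<in>UNIV. d i b) = 0} = {}" using T1 0 by auto
      show ?thesis unfolding e using h by simp
    next
      case (Suc T2)
      note T2 = Suc
      show ?thesis
      proof (cases "(\<Sum>b\<in>UNIV. d (Suc T2) b) = 0")
        case True
        have IH: "(\<Sum>c\<in>UNIV. cmod (Vf p P d T2 c)) \<le> \<rho> ^ (k T2 div 2)"
          using less.IH[of T2] T1 T2 unfolding \<rho>_def k_def by simp
        have "(\<Sum>c\<in>UNIV. cmod (Vf p P d (Suc (Suc T2)) c)) \<le> \<rho> * (\<Sum>a\<in>UNIV. cmod (Vf p P d T2 a))"
          unfolding \<rho>_def using norm_two[OF Pn rows dl d0, of d T2 p] db True by simp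
        also have "\<dots> \<le> \<rho> * \<rho> ^ (k T2 div 2)" using IH r0 by (rule mult_left_mono)
        also have "\<dots> = \<rho> ^ (k T2 div 2 + 1)" by simp
        also have "\<dots> \<le> \<rho> ^ (k (Suc (Suc T2)) div 2)"
        proof (rule power_decreasing[OF _ r0 r1])
          have "{i. 0 < i \<and> i < Suc (Suc T2) \<and> (\<Sum>b\<in>UNIV. d i b) = 0} \<subseteq> {i. 0 < i \<and> i < T2 \<and> (\<Sum>b\<in>UNIV. d i b) = 0} \<union> {T2, Suc T2}"
            by auto
          hence "k (Suc (Suc T2)) \<le> card ({i. 0 < i \<and> i < T2 \<and> (\<Sum>b\<in>UNIV. d i b) = 0} \<union> {T2, Suc T2})"
            unfolding k_def by (intro card_mono) (auto intro: fin)
          also have "\<dots> \<le> k T2 + card {T2, Suc T2}" unfolding k_def by (rule card_Un_le)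
          also have "\<dots> \<le> k T2 + 2" by (simp add: card_insert_if)
          finally show "k (Suc (Suc T2)) div 2 \<le> k T2 div 2 + 1" by linarith
        qed
        finally show ?thesis using T1 T2 unfolding \<rho>_def k_def by simp
      next
        case False
        have IH: "(\<Sum>c\<in>UNIV. cmod (Vf p P d (Suc T2) c)) \<le> \<rho> ^ (k (Suc T2) div 2)"
          using less.IH[of "Suc T2"] T1 T2 unfolding \<rho>_def k_def by simp
        have e: "k (Suc (Suc T2)) = k (Suc T2)"
        proof -
          have "{i. 0 < i \<and> i < Suc (Suc T2) \<and> (\<Sum>b\<in>UNIV. d i b) = 0} = {i. 0 < i \<and> i < Suc T2 \<and> (\<Sum>b\<in>UNIV. d i b) = 0}"
            using False less_Suc_eq by auto
          thus ?thesis unfolding k_def by simp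
        qed
        have "(\<Sum>c\<in>UNIV. cmod (Vf p P d (Suc (Suc T2)) c)) \<le> (\<Sum>c\<in>UNIV. cmod (Vf p P d (Suc T2) c))"
          using norm_step[OF Pn rows, of d "Suc T2" p] db by simp
        also note IH
        finally show ?thesis using T1 T2 e unfolding \<rho>_def k_def by simp
      qed
    qed
  qed
qed



lemma space_shift: "space (shift_space :: (int \<Rightarrow> 'a) measure) = UNIV"
  unfolding shift_space_def space_PiM by (auto simp: PiE_def extensional_def)

lemma comp_meas:
  assumes "sets M = sets (shift_space :: (int \<Rightarrow> 'a) measure)"
  shows "(\<lambda>x. x j) \<in> measurable M (count_space (UNIV::'a set))"
proof -
  have "measurable M (count_space UNIV) = measurable (PiM UNIV (\<lambda>_::int. count_space (UNIV::'a set))) (count_space (UNIV::'a set))"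
    using measurable_cong_sets[OF assms[unfolded shift_space_def] refl] .
  thus ?thesis using measurable_component_singleton[of j UNIV "\<lambda>_. count_space (UNIV::'a set)"] by simp
qed

lemma fun_meas:
  assumes "sets M = sets (shift_space :: (int \<Rightarrow> 'a) measure)"
  shows "(\<lambda>x. f (x j)) \<in> borel_measurable M"
  by (rule measurable_compose[OF comp_meas[OF assms]]) simp

lemma int_window:
  fixes \<mu> :: "(int \<Rightarrow> 'a::finite) measure" and d :: "nat \<Rightarrow> 'a \<Rightarrow> complex"
  assumes sm: "stationary_markov \<mu> p P"
  shows "(\<integral>x. (\<Prod>i\<le>T. d i (x (L + int i))) \<partial>\<mu>) = (\<Sum>c\<in>UNIV. Vf p P d T c)"
proof -
  from sm have sets: "sets \<mu> = sets shift_space" and ps: "prob_space \<mu>"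
    and cylm: "\<And>n m w. measure \<mu> {x \<in> space \<mu>. \<forall>i\<le>m. x (n + int i) = w i} = p (w 0) * (\<Prod>i<m. P (w i) (w (Suc i)))"
    unfolding stationary_markov_def by auto
  interpret prob_space \<mu> by fact
  have sp: "space \<mu> = UNIV" using sets_eq_imp_space_eq[OF sets] space_shift by simp
  define cyl where "cyl w = {x \<in> space \<mu>. \<forall>i\<le>T. x (L + int i) = w i}" for w :: "nat \<Rightarrow> 'a"
  have cyl_sets: "cyl w \<in> sets \<mu>" for w
  proof -
    have "cyl w = (\<Inter>i\<in>{..T}. (\<lambda>x. x (L + int i)) -` {w i} \<inter> space \<mu>)" using sp by (auto simp: cyl_def)
    also have "\<dots> \<in> sets \<mu>"
      by (intro sets.finite_INT) (auto intro: measurable_sets[OF comp_meas[OF sets]])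
    finally show ?thesis .
  qed
  have fin0: "emeasure \<mu> A < top" for A by (metis emeasure_finite less_top)
  have fin: "emeasure \<mu> A < \<infinity>" for A using fin0[of A] by simp
  define W where "W = PiE {..T} (\<lambda>_. UNIV :: 'a set)"
  have finW: "finite W" unfolding W_def by (rule finite_PiE) auto
  have pt: "(\<Prod>i\<le>T. d i (x (L + int i))) = (\<Sum>w\<in>W. indicator (cyl w) x *\<^sub>R (\<Prod>i\<le>T. d i (w i)))" for x
  proof -
    define wx where "wx = restrict (\<lambda>i. x (L + int i)) {..T}"
    have wxW: "wx \<in> W" unfolding W_def wx_def by auto
    have ind: "indicator (cyl w) x = (if w = wx then 1 else 0 :: real)" if "w \<in> W" for w
    proof -
      have "x \<in> cyl w \<longleftrightarrow> w = wx"
      proof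
        assume "x \<in> cyl w" then show "w = wx" using that unfolding cyl_def wx_def W_def
          by (auto simp: PiE_def extensional_def fun_eq_iff)
      next
        assume "w = wx" then show "x \<in> cyl w" using sp unfolding cyl_def wx_def by auto
      qed
      thus ?thesis by (simp add: indicator_def)
    qed
    have "(\<Sum>w\<in>W. indicator (cyl w) x *\<^sub>R (\<Prod>i\<le>T. d i (w i))) = (\<Sum>w\<in>W. if w = wx then (\<Prod>i\<le>T. d i (w i)) else 0)"
      by (rule sum.cong) (auto simp: ind)
    also have "\<dots> = (\<Prod>i\<le>T. d i (wx i))" using wxW finW by (simp add: sum.delta')
    also have "\<dots> = (\<Prod>i\<le>T. d i (x (L + int i)))" unfolding wx_def by (rule prod.cong) auto
    finally show ?thesis by simp
  qed
  have "(\<integral>x. (\<Prod>i\<le>T. d i (x (L + int i))) \<partial>\<mu>) = (\<integral>x. (\<Sum>w\<in>W. indicator (cyl w) x *\<^sub>R (\<Prod>i\<le>T. d i (w i))) \<partial>\<mu>)"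
    by (simp only: pt)
  also have "\<dots> = (\<Sum>w\<in>W. measure \<mu> (cyl w) *\<^sub>R (\<Prod>i\<le>T. d i (w i)))"
  proof -
    have "(\<integral>x. (\<Sum>w\<in>W. indicator (cyl w) x *\<^sub>R (\<Prod>i\<le>T. d i (w i))) \<partial>\<mu>) = (\<Sum>w\<in>W. (\<integral>x. indicator (cyl w) x *\<^sub>R (\<Prod>i\<le>T. d i (w i)) \<partial>\<mu>))"
      by (rule Bochner_Integration.integral_sum) (use cyl_sets in \<open>intro integrable_scaleR_left integrable_real_indicator, auto simp: fin0\<close>)
    also have "(\<Sum>w\<in>W. \<integral>x. indicator (cyl w) x *\<^sub>R (\<Prod>i\<le>T. d i (w i)) \<partial>\<mu>) = (\<Sum>w\<in>W. measure \<mu> (cyl w) *\<^sub>R (\<Prod>i\<le>T. d i (w i)))"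
    proof (rule sum.cong[OF refl])
      fix w
      have "(\<integral>x. indicator (cyl w) x *\<^sub>R (\<Prod>i\<le>T. d i (w i)) \<partial>\<mu>) = (\<integral>x. indicator (cyl w) x \<partial>\<mu>) *\<^sub>R (\<Prod>i\<le>T. d i (w i))"
        by (intro integral_scaleR_left integrable_real_indicator cyl_sets fin)
      also have "(\<integral>x. indicator (cyl w) x \<partial>\<mu>) = measure \<mu> (cyl w)"
      proof -
        have "cyl w \<inter> space \<mu> = cyl w" unfolding cyl_def by blast
        thus ?thesis using Bochner_Integration.integral_indicator[of \<mu> "cyl w"] by simp
      qed
      finally show "(\<integral>x. indicator (cyl w) x *\<^sub>R (\<Prod>i\<le>T. d i (w i)) \<partial>\<mu>) = measure \<mu> (cyl w) *\<^sub>R (\<Prod>i\<le>T. d i (w i))" .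
    qed
    finally show ?thesis .
  qed
  also have "\<dots> = (\<Sum>w\<in>W. complex_of_real (p (w 0) * (\<Prod>i<T. P (w i) (w (Suc i)))) * (\<Prod>i\<le>T. d i (w i)) * 1)"
    by (rule sum.cong[OF refl]) (simp only: cyl_def cylm scaleR_conv_of_real mult_1_right)
  also have "\<dots> = (\<Sum>c\<in>UNIV. Vf p P d T c * 1)" unfolding W_def by (rule word_sum)
  finally show ?thesis by simp
qed



lemma char_norm: "character ch \<Longrightarrow> cmod (ch b) = 1"
  unfolding character_def by auto

lemma char_sum_zero:
  fixes ch :: "'a::{finite,ab_group_add} \<Rightarrow> complex"
  assumes "character ch" "ch \<noteq> (\<lambda>_. 1)"
  shows "(\<Sum>b\<in>UNIV. ch b) = 0"
proof -
  obtain a where a: "ch a \<noteq> 1" using assms(2) by auto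
  have "(\<Sum>b\<in>UNIV. ch b) = (\<Sum>b\<in>UNIV. ch (a + b))"
    by (rule sum.reindex_bij_witness[of _ "\<lambda>b. a + b" "\<lambda>b. b - a"]) auto
  also have "\<dots> = ch a * (\<Sum>b\<in>UNIV. ch b)"
    using assms(1) unfolding character_def by (simp add: sum_distrib_left)
  finally have "(1 - ch a) * (\<Sum>b\<in>UNIV. ch b) = 0" by (simp add: algebra_simps)
  thus ?thesis using a by simp
qed

lemma prod_window:
  fixes F :: "'j \<Rightarrow> 'c::comm_monoid_mult"
  assumes "inj_on h I" "S \<subseteq> h ` I" "finite I"
  shows "(\<Prod>i\<in>I. if h i \<in> S then F (h i) else 1) = (\<Prod>j\<in>S. F j)"
proof -
  have "(\<Prod>i\<in>I. if h i \<in> S then F (h i) else 1) = (\<Prod>j\<in>h ` I. if j \<in> S then F j else 1)"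
    using prod.reindex[OF assms(1), of "\<lambda>j. if j \<in> S then F j else 1"] by simp
  also have "\<dots> = (\<Prod>j\<in>h ` I \<inter> S. F j)"
    using assms(3) by (simp add: prod.inter_restrict)
  also have "h ` I \<inter> S = S" using assms(2) by blast
  finally show ?thesis .
qed

lemma prod_indicator_c:
  assumes "finite J"
  shows "(\<Prod>j\<in>J. (indicator (X j) (x j) :: complex)) = indicator {x. \<forall>j\<in>J. x j \<in> X j} x"
proof (cases "\<forall>j\<in>J. x j \<in> X j")
  case True thus ?thesis by (simp add: indicator_def)
next
  case False
  then obtain j where "j \<in> J" "x j \<notin> X j" by auto
  thus ?thesis using assms False by (auto simp: indicator_def prod_zero_iff)
qed

lemma base_bound:
  fixes \<mu> :: "(int \<Rightarrow> 'a::{finite,ab_group_add}) measure" and c :: "int \<Rightarrow> 'a \<Rightarrow> complex"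
  assumes sm: "stationary_markov \<mu> p P" and dl: "\<forall>a b. \<delta> \<le> P a b" and d0: "0 \<le> \<delta>"
    and J: "finite J" and chars: "\<forall>n. character (c n)" and fS: "finite (char_support c)"
  shows "cmod (\<integral>x. indicator {x. \<forall>j\<in>J. x j \<in> X j} x * seq_char c x \<partial>\<mu>)
          \<le> (1 - (real CARD('a) * \<delta>)^2) ^ ((char_rank c - card J - 2) div 2)"
proof -
  from sm have Pn: "\<forall>a b. 0 \<le> P a b" and rows: "\<forall>a. (\<Sum>b\<in>UNIV. P a b) = 1"
    and pn: "\<forall>a. 0 \<le> p a" and ps: "(\<Sum>a\<in>UNIV. p a) = 1"
    unfolding stationary_markov_def by auto
  define S where "S = char_support c"
  define K where "K = (\<Sum>j\<in>S \<union> J. nat \<bar>j\<bar>)"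
  have Kb: "\<bar>j\<bar> \<le> int K" if "j \<in> S \<union> J" for j
  proof -
    have "nat \<bar>j\<bar> \<le> K" unfolding K_def using that fS J S_def by (intro member_le_sum) auto
    thus ?thesis by linarith
  qed
  define L where "L = - int K"
  define T where "T = 2 * K"
  define h where "h i = L + int i" for i :: nat
  have inj: "inj_on h {..T}" unfolding h_def by (rule inj_onI) simp
  have cover: "U \<subseteq> h ` {..T}" if "U \<subseteq> S \<union> J" for U
  proof
    fix j assume "j \<in> U"
    hence "\<bar>j\<bar> \<le> int K" using that Kb by auto
    hence "j = h (nat (j - L))" "nat (j - L) \<in> {..T}" unfolding h_def L_def T_def by auto
    thus "j \<in> h ` {..T}" by blast
  qed
  define d where "d i a = (if h i \<in> S then c (h i) a else 1) * (if h i \<in> J then indicator (X (h i)) a else (1::complex))" for i a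
  have int_eq: "indicator {x. \<forall>j\<in>J. x j \<in> X j} x * seq_char c x = (\<Prod>i\<le>T. d i (x (L + int i)))" for x
  proof -
    have "(\<Prod>i\<le>T. d i (x (L + int i))) = (\<Prod>i\<le>T. if h i \<in> S then c (h i) (x (h i)) else 1) * (\<Prod>i\<le>T. if h i \<in> J then indicator (X (h i)) (x (h i)) else (1::complex))"
      unfolding d_def h_def by (rule prod.distrib)
    also have "\<dots> = (\<Prod>j\<in>S. c j (x j)) * (\<Prod>j\<in>J. indicator (X j) (x j))"
      using prod_window[OF inj cover, of S "\<lambda>j. c j (x j)"] prod_window[OF inj cover, of J "\<lambda>j. indicator (X j) (x j) :: complex"]
      by simp
    also have "\<dots> = seq_char c x * indicator {x. \<forall>j\<in>J. x j \<in> X j} x"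
    proof -
      have "(\<Prod>j\<in>J. indicator (X j) (x j)) = (indicator {x. \<forall>j\<in>J. x j \<in> X j} x :: complex)"
        by (rule prod_indicator_c[OF J])
      thus ?thesis unfolding seq_char_def S_def by simp
    qed
    finally show ?thesis by simp
  qed
  have db: "\<forall>i b. cmod (d i b) \<le> 1"
    unfolding d_def using chars by (auto simp: norm_mult char_norm indicator_def)
  define k where "k = card {i. 0 < i \<and> i < T \<and> (\<Sum>b\<in>UNIV. d i b) = 0}"
  have kb: "char_rank c - card J - 2 \<le> k"
  proof -
    define S' where "S' = S - J - {L, L + int T}"
    have "card S - card J \<le> card (S - J)" by (rule diff_card_le_card_Diff[OF J])
    moreover have "card (S - J) - 2 \<le> card S'"
    proof -
      have "card (S - J) - card {L, L + int T} \<le> card S'"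
        unfolding S'_def by (rule diff_card_le_card_Diff) simp
      moreover have "card {L, L + int T} \<le> 2" by (simp add: card_insert_if)
      ultimately show ?thesis by linarith
    qed
    moreover have "card S' \<le> k"
    proof -
      have "inj_on (\<lambda>j. nat (j - L)) S'"
      proof (rule inj_onI)
        fix j j' assume "j \<in> S'" "j' \<in> S'" "nat (j - L) = nat (j' - L)"
        moreover have "L \<le> j" "L \<le> j'" using \<open>j \<in> S'\<close> \<open>j' \<in> S'\<close> Kb unfolding S'_def L_def by force+
        ultimately show "j = j'" by simp
      qed
      moreover have "(\<lambda>j. nat (j - L)) ` S' \<subseteq> {i. 0 < i \<and> i < T \<and> (\<Sum>b\<in>UNIV. d i b) = 0}"
      proof
        fix i assume "i \<in> (\<lambda>j. nat (j - L)) ` S'"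
        then obtain j where j: "j \<in> S'" "i = nat (j - L)" by auto
        have jS: "j \<in> S" "j \<notin> J" "j \<noteq> L" "j \<noteq> L + int T" using j unfolding S'_def by auto
        have "\<bar>j\<bar> \<le> int K" using jS Kb by auto
        hence hi: "h i = j" and "0 < i" "i < T" using jS j unfolding h_def L_def T_def by auto
        moreover have "(\<Sum>b\<in>UNIV. d i b) = 0"
        proof -
          have "d i = c j" unfolding d_def hi using jS by auto
          moreover have "c j \<noteq> (\<lambda>_. 1)" using jS unfolding S_def char_support_def by auto
          ultimately show ?thesis using char_sum_zero[of "c j"] chars by simp
        qed
        ultimately show "i \<in> {i. 0 < i \<and> i < T \<and> (\<Sum>b\<in>UNIV. d i b) = 0}" by simp
      qed
      moreover have "finite {i. 0 < i \<and> i < T \<and> (\<Sum>b\<in>UNIV. d i b) = 0}"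
        by (rule finite_subset[of _ "{..<T}"]) auto
      ultimately show ?thesis unfolding k_def by (rule card_inj_on_le)
    qed
    ultimately show ?thesis unfolding char_rank_def S_def[symmetric] by linarith
  qed
  have Nd: "real CARD('a) * \<delta> \<le> 1"
  proof -
    have "real CARD('a) * \<delta> = (\<Sum>b\<in>(UNIV::'a set). \<delta>)" by simp
    also have "\<dots> \<le> (\<Sum>b\<in>UNIV. P undefined b)" using dl by (intro sum_mono) auto
    finally show ?thesis using rows by simp
  qed
  have r0: "0 \<le> 1 - (real CARD('a) * \<delta>)^2" using Nd d0
    by (simp add: power2_eq_square) (metis mult_le_one of_nat_0_le_iff zero_le_mult_iff)
  have "(\<integral>x. indicator {x. \<forall>j\<in>J. x j \<in> X j} x * seq_char c x \<partial>\<mu>) = (\<integral>x. (\<Prod>i\<le>T. d i (x (L + int i))) \<partial>\<mu>)"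
    by (simp only: int_eq)
  also have "\<dots> = (\<Sum>a\<in>UNIV. Vf p P d T a)" by (rule int_window[OF sm])
  finally have "cmod (\<integral>x. indicator {x. \<forall>j\<in>J. x j \<in> X j} x * seq_char c x \<partial>\<mu>) \<le> (\<Sum>a\<in>UNIV. cmod (Vf p P d T a))"
    using norm_sum by simp
  also have "\<dots> \<le> (1 - (real CARD('a) * \<delta>)^2) ^ (k div 2)"
    unfolding k_def by (rule norm_iter[OF Pn rows dl d0 pn ps db])
  also have "\<dots> \<le> (1 - (real CARD('a) * \<delta>)^2) ^ ((char_rank c - card J - 2) div 2)"
    using kb r0 by (intro power_decreasing div_le_mono) auto
  finally show ?thesis .
qed



definition hm :: "(int \<Rightarrow> 'a::ab_group_add) measure \<Rightarrow> ((int \<Rightarrow> 'a) \<Rightarrow> complex) \<Rightarrow> bool" where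
  "hm M f \<longleftrightarrow> (\<forall>\<epsilon>>0. \<exists>R::nat. \<forall>c. (\<forall>n. character (c n)) \<and> finite (char_support c) \<and> char_rank c > R
        \<longrightarrow> cmod (\<integral>x. f x * seq_char c x \<partial>M) < \<epsilon>)"

lemma seq_char_meas:
  assumes "sets M = sets (shift_space :: (int \<Rightarrow> 'a) measure)"
  shows "(seq_char c :: (int \<Rightarrow> 'a::ab_group_add) \<Rightarrow> complex) \<in> borel_measurable M"
proof -
  have "seq_char c = (\<lambda>x. \<Prod>n\<in>char_support c. c n (x n))" by (rule ext) (simp add: seq_char_def)
  also have "\<dots> \<in> borel_measurable M" by (intro borel_measurable_prod fun_meas[OF assms])
  finally show ?thesis .
qed

lemma seq_char_norm: "\<forall>n. character (c n) \<Longrightarrow> cmod (seq_char c x) = 1"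
  unfolding seq_char_def by (simp add: prod_norm[symmetric] char_norm)

lemma int_char:
  assumes "sets M = sets (shift_space :: (int \<Rightarrow> 'a::ab_group_add) measure)" "\<forall>n. character (c n)" "integrable M f"
  shows "integrable M (\<lambda>x. f x * seq_char c x :: complex)"
proof (rule Bochner_Integration.integrable_bound[OF assms(3)])
  show "(\<lambda>x. f x * seq_char c x) \<in> borel_measurable M"
    by (intro borel_measurable_times borel_measurable_integrable[OF assms(3)] seq_char_meas[OF assms(1)])
  show "AE x in M. norm (f x * seq_char c x) \<le> norm (f x)"
    using assms(2) by (simp add: norm_mult seq_char_norm)
qed

lemma hm_cong: "(\<And>x. x \<in> space M \<Longrightarrow> f x = g x) \<Longrightarrow> hm M f = hm M g"
proof -
  assume h: "\<And>x. x \<in> space M \<Longrightarrow> f x = g x"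
  have "(\<integral>x. f x * seq_char c x \<partial>M) = (\<integral>x. g x * seq_char c x \<partial>M)" for c
    by (rule Bochner_Integration.integral_cong) (auto simp: h)
  thus ?thesis unfolding hm_def by simp
qed

lemma hm_add:
  assumes S: "sets M = sets (shift_space :: (int \<Rightarrow> 'a::ab_group_add) measure)"
    and fi: "integrable M f" and gi: "integrable M g" and hf: "hm M f" and hg: "hm M g"
  shows "hm M (\<lambda>x. f x + g x)"
  unfolding hm_def
proof (intro allI impI)
  fix \<epsilon> :: real assume e: "\<epsilon> > 0"
  obtain R1 where R1: "\<And>c. (\<forall>n. character (c n)) \<and> finite (char_support c) \<and> char_rank c > R1 \<Longrightarrow> cmod (\<integral>x. f x * seq_char c x \<partial>M) < \<epsilon>/2"
    using hf e unfolding hm_def by (meson half_gt_zero)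
  obtain R2 where R2: "\<And>c. (\<forall>n. character (c n)) \<and> finite (char_support c) \<and> char_rank c > R2 \<Longrightarrow> cmod (\<integral>x. g x * seq_char c x \<partial>M) < \<epsilon>/2"
    using hg e unfolding hm_def by (meson half_gt_zero)
  show "\<exists>R. \<forall>c. (\<forall>n. character (c n)) \<and> finite (char_support c) \<and> R < char_rank c \<longrightarrow> cmod (\<integral>x. (f x + g x) * seq_char c x \<partial>M) < \<epsilon>"
  proof (intro exI[of _ "max R1 R2"] allI impI)
    fix c :: "int \<Rightarrow> 'a \<Rightarrow> complex" assume H: "(\<forall>n. character (c n)) \<and> finite (char_support c) \<and> max R1 R2 < char_rank c"
    have "(\<integral>x. (f x + g x) * seq_char c x \<partial>M) = (\<integral>x. f x * seq_char c x \<partial>M) + (\<integral>x. g x * seq_char c x \<partial>M)"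
      unfolding distrib_right using int_char[OF S _ fi] int_char[OF S _ gi] H by (intro Bochner_Integration.integral_add) auto
    hence "cmod (\<integral>x. (f x + g x) * seq_char c x \<partial>M) \<le> cmod (\<integral>x. f x * seq_char c x \<partial>M) + cmod (\<integral>x. g x * seq_char c x \<partial>M)"
      by (simp add: norm_triangle_ineq)
    also have "\<dots> < \<epsilon>/2 + \<epsilon>/2" using R1[of c] R2[of c] H by (intro add_strict_mono) auto
    finally show "cmod (\<integral>x. (f x + g x) * seq_char c x \<partial>M) < \<epsilon>" by simp
  qed
qed

lemma hm_scale:
  assumes hf: "hm M f"
  shows "hm M (\<lambda>x. a * f x)"
proof (cases "a = 0")
  case True thus ?thesis unfolding hm_def by simp
next
  case False
  show ?thesis unfolding hm_def
  proof (intro allI impI)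
    fix \<epsilon> :: real assume e: "\<epsilon> > 0"
    have "\<epsilon> / cmod a > 0" using e False by simp
    then obtain R where R: "\<And>c. (\<forall>n. character (c n)) \<and> finite (char_support c) \<and> char_rank c > R \<Longrightarrow> cmod (\<integral>x. f x * seq_char c x \<partial>M) < \<epsilon> / cmod a"
      using hf unfolding hm_def by meson
    show "\<exists>R. \<forall>c. (\<forall>n. character (c n)) \<and> finite (char_support c) \<and> R < char_rank c \<longrightarrow> cmod (\<integral>x. a * f x * seq_char c x \<partial>M) < \<epsilon>"
    proof (intro exI[of _ R] allI impI)
      fix c :: "int \<Rightarrow> 'a \<Rightarrow> complex" assume H: "(\<forall>n. character (c n)) \<and> finite (char_support c) \<and> R < char_rank c"
      have "cmod (\<integral>x. a * f x * seq_char c x \<partial>M) = cmod a * cmod (\<integral>x. f x * seq_char c x \<partial>M)"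
        by (simp add: mult.assoc norm_mult)
      also have "\<dots> < cmod a * (\<epsilon> / cmod a)" using R[OF H] False by (intro mult_strict_left_mono) auto
      also have "\<dots> = \<epsilon>" using False by simp
      finally show "cmod (\<integral>x. a * f x * seq_char c x \<partial>M) < \<epsilon>" .
    qed
  qed
qed

lemma hm_approx:
  assumes S: "sets M = sets (shift_space :: (int \<Rightarrow> 'a::ab_group_add) measure)"
    and fi: "integrable M f"
    and ap: "\<And>e. e > 0 \<Longrightarrow> \<exists>g. integrable M g \<and> hm M g \<and> (\<integral>x. cmod (f x - g x) \<partial>M) < e"
  shows "hm M f"
  unfolding hm_def
proof (intro allI impI)
  fix \<epsilon> :: real assume e: "\<epsilon> > 0"
  obtain g where gi: "integrable M g" and hg: "hm M g" and gd: "(\<integral>x. cmod (f x - g x) \<partial>M) < \<epsilon>/2"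
    using ap[of "\<epsilon>/2"] e by auto
  obtain R where R: "\<And>c. (\<forall>n. character (c n)) \<and> finite (char_support c) \<and> char_rank c > R \<Longrightarrow> cmod (\<integral>x. g x * seq_char c x \<partial>M) < \<epsilon>/2"
    using hg e unfolding hm_def by (meson half_gt_zero)
  show "\<exists>R. \<forall>c. (\<forall>n. character (c n)) \<and> finite (char_support c) \<and> R < char_rank c \<longrightarrow> cmod (\<integral>x. f x * seq_char c x \<partial>M) < \<epsilon>"
  proof (intro exI[of _ R] allI impI)
    fix c :: "int \<Rightarrow> 'a \<Rightarrow> complex" assume H: "(\<forall>n. character (c n)) \<and> finite (char_support c) \<and> R < char_rank c"
    have "(\<integral>x. f x * seq_char c x \<partial>M) = (\<integral>x. g x * seq_char c x \<partial>M) + (\<integral>x. (f x - g x) * seq_char c x \<partial>M)"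
    proof -
      have "(\<integral>x. g x * seq_char c x + (f x - g x) * seq_char c x \<partial>M) = (\<integral>x. g x * seq_char c x \<partial>M) + (\<integral>x. (f x - g x) * seq_char c x \<partial>M)"
        using int_char[OF S _ gi] int_char[OF S _ Bochner_Integration.integrable_diff[OF fi gi]] H
        by (intro Bochner_Integration.integral_add) auto
      moreover have "(\<lambda>x. g x * seq_char c x + (f x - g x) * seq_char c x) = (\<lambda>x. f x * seq_char c x)"
        by (rule ext) (simp add: algebra_simps)
      ultimately show ?thesis by simp
    qed
    hence "cmod (\<integral>x. f x * seq_char c x \<partial>M) \<le> cmod (\<integral>x. g x * seq_char c x \<partial>M) + cmod (\<integral>x. (f x - g x) * seq_char c x \<partial>M)"
      by (simp add: norm_triangle_ineq)
    also have "cmod (\<integral>x. (f x - g x) * seq_char c x \<partial>M) \<le> (\<integral>x. cmod (f x - g x) \<partial>M)"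
    proof -
      have "cmod (\<integral>x. (f x - g x) * seq_char c x \<partial>M) \<le> (\<integral>x. cmod ((f x - g x) * seq_char c x) \<partial>M)"
        by (rule integral_norm_bound)
      also have "\<dots> = (\<integral>x. cmod (f x - g x) \<partial>M)"
        using H by (simp add: norm_mult seq_char_norm)
      finally show ?thesis .
    qed
    also have "cmod (\<integral>x. g x * seq_char c x \<partial>M) + (\<integral>x. cmod (f x - g x) \<partial>M) < \<epsilon>/2 + \<epsilon>/2"
      using R[OF H] gd by (intro add_strict_mono)
    finally show "cmod (\<integral>x. f x * seq_char c x \<partial>M) < \<epsilon>" by simp
  qed
qed



lemma good_basic:
  fixes \<mu> :: "(int \<Rightarrow> 'a::{finite,ab_group_add}) measure"
  assumes sm: "stationary_markov \<mu> p P" and dl: "\<forall>a b. \<delta> \<le> P a b" and d0: "0 < \<delta>" and J: "finite J"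
  shows "hm \<mu> (indicator {x. \<forall>j\<in>J. x j \<in> X j})"
  unfolding hm_def
proof (intro allI impI)
  fix \<epsilon> :: real assume e: "\<epsilon> > 0"
  from sm have rows: "\<forall>a. (\<Sum>b\<in>UNIV. P a b) = 1" unfolding stationary_markov_def by auto
  define \<rho> where "\<rho> = 1 - (real CARD('a) * \<delta>)^2"
  have Nd: "real CARD('a) * \<delta> \<le> 1"
  proof -
    have "real CARD('a) * \<delta> = (\<Sum>b\<in>(UNIV::'a set). \<delta>)" by simp
    also have "\<dots> \<le> (\<Sum>b\<in>UNIV. P undefined b)" using dl by (intro sum_mono) auto
    finally show ?thesis using rows by simp
  qed
  have r0: "0 \<le> \<rho>" unfolding \<rho>_def using Nd d0
    by (simp add: power2_eq_square) (metis less_eq_real_def mult_le_one of_nat_0_le_iff zero_le_mult_iff)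
  have r1: "\<rho> < 1" unfolding \<rho>_def using d0 by simp
  have "(\<lambda>n. \<rho> ^ n) \<longlonglongrightarrow> 0" using r0 r1 by (intro LIMSEQ_power_zero) simp
  from order_tendstoD(2)[OF this e] obtain m where m: "\<rho> ^ m < \<epsilon>"
    by (auto simp: eventually_sequentially)
  show "\<exists>R. \<forall>c. (\<forall>n. character (c n)) \<and> finite (char_support c) \<and> R < char_rank c \<longrightarrow>
      cmod (\<integral>x. indicator {x. \<forall>j\<in>J. x j \<in> X j} x * seq_char c x \<partial>\<mu>) < \<epsilon>"
  proof (intro exI[of _ "2 * m + card J + 2"] allI impI)
    fix c :: "int \<Rightarrow> 'a \<Rightarrow> complex"
    assume H: "(\<forall>n. character (c n)) \<and> finite (char_support c) \<and> 2 * m + card J + 2 < char_rank c"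
    have "cmod (\<integral>x. indicator {x. \<forall>j\<in>J. x j \<in> X j} x * seq_char c x \<partial>\<mu>) \<le> \<rho> ^ ((char_rank c - card J - 2) div 2)"
      unfolding \<rho>_def using H by (intro base_bound[OF sm dl less_imp_le[OF d0] J]) auto
    also have "\<dots> \<le> \<rho> ^ m"
      using H r0 r1 by (intro power_decreasing) auto
    finally show "cmod (\<integral>x. indicator {x. \<forall>j\<in>J. x j \<in> X j} x * seq_char c x \<partial>\<mu>) < \<epsilon>" using m by simp
  qed
qed

lemma ind_int:
  assumes "finite_measure M" "A \<in> sets M"
  shows "integrable M (\<lambda>x. indicator A x :: complex)"
proof -
  interpret finite_measure M by fact
  have "(\<lambda>x. indicator A x :: complex) = (\<lambda>x. indicator A x *\<^sub>R 1)" by (rule ext) (simp add: indicator_def)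
  moreover have "integrable M (\<lambda>x. indicator A x *\<^sub>R (1::complex))"
    using assms(2) by (intro integrable_scaleR_left integrable_real_indicator) (auto simp: less_top[symmetric])
  ultimately show ?thesis by simp
qed

lemma hm_sum:
  assumes S: "sets M = sets (shift_space :: (int \<Rightarrow> 'a::ab_group_add) measure)"
  shows "(\<forall>i<(n::nat). integrable M (f i) \<and> hm M (f i)) \<Longrightarrow> hm M (\<lambda>x. \<Sum>i<n. f i x)"
proof (induction n)
  case 0 thus ?case unfolding hm_def by simp
next
  case (Suc n)
  have "hm M (\<lambda>x. (\<Sum>i<n. f i x) + f n x)"
    using Suc.prems Suc.IH by (intro hm_add[OF S] Bochner_Integration.integrable_sum) auto
  thus ?case by simp
qed

lemma good_sets:
  fixes \<mu> :: "(int \<Rightarrow> 'a::{finite,ab_group_add}) measure"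
  assumes sm: "stationary_markov \<mu> p P" and dl: "\<forall>a b. \<delta> \<le> P a b" and d0: "0 < \<delta>" and A: "A \<in> sets \<mu>"
  shows "hm \<mu> (indicator A)"
proof -
  from sm have S: "sets \<mu> = sets shift_space" and ps: "prob_space \<mu>"
    unfolding stationary_markov_def by auto
  interpret prob_space \<mu> by fact
  have sp: "space \<mu> = UNIV" using sets_eq_imp_space_eq[OF S] space_shift by simp
  have Om: "(\<Pi>\<^sub>E i\<in>(UNIV::int set). space (count_space (UNIV::'a set))) = UNIV" by (auto simp: PiE_def extensional_def)
  have sig: "sets \<mu> = sigma_sets (\<Pi>\<^sub>E i\<in>(UNIV::int set). space (count_space (UNIV::'a set))) (prod_algebra UNIV (\<lambda>_. count_space (UNIV::'a set)))"
    using S unfolding shift_space_def sets_PiM by simp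
  have all_int: "integrable \<mu> (\<lambda>x. indicator B x :: complex)" if "B \<in> sets \<mu>" for B
    by (rule ind_int[OF finite_measure that])
  have univ: "hm \<mu> (indicator UNIV)"
    using good_basic[OF sm dl d0 finite.emptyI, of X] by simp
  from A[unfolded sig] show ?thesis
  proof (induction rule: sigma_sets_induct_disjoint[OF Int_stable_prod_algebra prod_algebra_sets_into_space, consumes 1, case_names basic empty compl union])
    case (basic B)
    then obtain J E where B: "B = prod_emb UNIV (\<lambda>_. count_space UNIV) J (\<Pi>\<^sub>E j\<in>J. E j)" and J: "finite J"
      by (auto elim!: prod_algebraE)
    have "B = {x. \<forall>j\<in>J. x j \<in> E j}" unfolding B prod_emb_def by (auto simp: PiE_def extensional_def restrict_def Pi_def)
    thus ?case using good_basic[OF sm dl d0 J] by simp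
  next
    case empty
    thus ?case unfolding hm_def by simp
  next
    case (compl B)
    have Bs: "B \<in> sets \<mu>" using compl(1) sig by simp
    have "hm \<mu> (\<lambda>x. indicator UNIV x + (-1) * indicator B x)"
      using univ compl(2) Bs all_int[of UNIV] all_int[OF Bs]
      by (intro hm_add[OF S] hm_scale Bochner_Integration.integrable_mult_right) auto
    moreover have "(\<lambda>x. indicator UNIV x + (-1) * indicator B x) = (indicator ((\<Pi>\<^sub>E i\<in>(UNIV::int set). space (count_space (UNIV::'a set))) - B) :: _ \<Rightarrow> complex)"
      unfolding Om by (rule ext) (simp add: indicator_def)
    ultimately show ?case by simp
  next
    case (union B)
    have Bs: "B i \<in> sets \<mu>" for i using union(2) sig by auto
    define U where "U = (\<Union>i. B i)"
    define C where "C n = (\<Union>i<n. B i)" for n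
    have Us: "U \<in> sets \<mu>" unfolding U_def using Bs by auto
    have Cs: "C n \<in> sets \<mu>" for n unfolding C_def using Bs by auto
    have CU: "C n \<subseteq> U" for n unfolding C_def U_def by auto
    have lim: "(\<lambda>n. measure \<mu> (C n)) \<longlonglongrightarrow> measure \<mu> (\<Union>n. C n)"
      by (rule finite_Lim_measure_incseq) (use Cs in \<open>auto simp: incseq_def C_def intro: less_le_trans\<close>)
    have UC: "(\<Union>n. C n) = U" unfolding C_def U_def by auto
    show ?case unfolding U_def[symmetric]
    proof (rule hm_approx[OF S all_int[OF Us]])
      fix e :: real assume e: "e > 0"
      from lim[unfolded UC] have "(\<lambda>n. measure \<mu> U - measure \<mu> (C n)) \<longlonglongrightarrow> measure \<mu> U - measure \<mu> U"
        by (intro tendsto_diff tendsto_const)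
      from order_tendstoD(2)[OF this, of e] e obtain n where n: "measure \<mu> U - measure \<mu> (C n) < e"
        by (auto simp: eventually_sequentially)
      have hC: "hm \<mu> (indicator (C n))"
      proof -
        have "hm \<mu> (\<lambda>x. \<Sum>i<n. indicator (B i) x)"
          using union(3) all_int[OF Bs] by (intro hm_sum[OF S]) blast
        moreover have "(\<lambda>x. \<Sum>i<n. indicator (B i) x) = (indicator (C n) :: _ \<Rightarrow> complex)"
        proof
          fix x
          have "disjoint_family_on B {..<n}" using union(1) unfolding disjoint_family_on_def by auto
          thus "(\<Sum>i<n. indicator (B i) x) = (indicator (C n) x :: complex)"
            unfolding C_def by (subst indicator_UN_disjoint) auto
        qed
        ultimately show ?thesis by simp
      qed
      have "(\<integral>x. cmod (indicator U x - indicator (C n) x :: complex) \<partial>\<mu>) = (\<integral>x. indicator (U - C n) x \<partial>\<mu>)"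
        using CU[of n] by (intro Bochner_Integration.integral_cong) (auto simp: indicator_def)
      also have "\<dots> = measure \<mu> (U - C n)"
        using Bochner_Integration.integral_indicator[of \<mu> "U - C n"] sp by simp
      also have "\<dots> = measure \<mu> U - measure \<mu> (C n)"
        by (rule finite_measure_Diff[OF Us Cs CU])
      finally show "\<exists>g. integrable \<mu> g \<and> hm \<mu> g \<and> (\<integral>x. cmod (indicator U x - g x) \<partial>\<mu>) < e"
        using n hC all_int[OF Cs, of n] by (intro exI[of _ "indicator (C n)"]) simp
    qed
  qed
qed



theorem mainTheorem7:
  fixes \<mu> \<nu> :: "(int \<Rightarrow> 'a::{ab_group_add, finite}) measure"
    and p :: "'a \<Rightarrow> real" and P :: "'a \<Rightarrow> 'a \<Rightarrow> real"
  assumes "stationary_markov \<mu> p P"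
    and "\<forall>a b. P a b \<noteq> 0"
    and "prob_space \<nu>"
    and "sets \<nu> = sets \<mu>"
    and "absolutely_continuous \<mu> \<nu>"
  shows "harmonically_mixing \<nu>"
proof -
  note sm = assms(1)
  from sm have S: "sets \<mu> = sets shift_space" and ps\<mu>: "prob_space \<mu>" and Pn: "\<forall>a b. 0 \<le> P a b"
    unfolding stationary_markov_def by auto
  define \<delta> where "\<delta> = Min (range (\<lambda>(a, b). P a b))"
  have finr: "finite (range (\<lambda>(a, b). P a b))" by simp
  have dl: "\<forall>a b. \<delta> \<le> P a b" unfolding \<delta>_def using finr by (auto intro!: Min_le)
  have d0: "0 < \<delta>"
  proof -
    have "\<delta> \<in> range (\<lambda>(a, b). P a b)" unfolding \<delta>_def using finr by (intro Min_in) auto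
    then obtain a b where "\<delta> = P a b" by auto
    thus ?thesis using Pn assms(2) by (metis less_eq_real_def)
  qed
  have good: "hm \<mu> (indicator A)" if "A \<in> sets \<mu>" for A
    by (rule good_sets[OF sm dl d0 that])
  interpret sigma_finite_measure \<mu> using ps\<mu> by (rule prob_space_imp_sigma_finite)
  have f\<nu>: "finite_measure \<nu>" using assms(3) by (rule prob_space.finite_measure)
  obtain D where Dm: "D \<in> borel_measurable \<mu>" and DAE: "AE x in \<mu>. RN_deriv \<mu> \<nu> x = ennreal (D x)"
    and Dnn: "\<And>x. 0 \<le> D x"
    using real_RN_deriv[OF f\<nu> assms(5) assms(4)] by metis
  have dens: "density \<mu> (\<lambda>x. ennreal (D x)) = \<nu>"
  proof -
    have "density \<mu> (RN_deriv \<mu> \<nu>) = density \<mu> (\<lambda>x. ennreal (D x))"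
      by (rule density_cong) (use DAE Dm in auto)
    thus ?thesis using density_RN_deriv[OF assms(5,4)] by simp
  qed
  have Dint: "integrable \<mu> D"
  proof -
    have "integrable \<nu> (\<lambda>_. 1::real)" by (rule finite_measure.integrable_const[OF f\<nu>])
    hence "integrable (density \<mu> D) (\<lambda>_. 1::real)" using dens by simp
    hence "integrable \<mu> (\<lambda>x. D x *\<^sub>R (1::real))"
      using integrable_density[of "\<lambda>_. 1::real" \<mu> D] Dm Dnn by simp
    thus ?thesis by simp
  qed
  have hD: "hm \<mu> (\<lambda>x. complex_of_real (D x))"
    using Dint
  proof (induct rule: integrable_induct)
    case (base A c)
    have "hm \<mu> (\<lambda>x. complex_of_real c * indicator A x)" using good base(1) by (intro hm_scale) auto
    moreover have "(\<lambda>x. complex_of_real (indicator A x *\<^sub>R c)) = (\<lambda>x. complex_of_real c * indicator A x)"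
      by (auto simp: indicator_def)
    ultimately show ?case by simp
  next
    case (add f g)
    have "hm \<mu> (\<lambda>x. complex_of_real (f x) + complex_of_real (g x))" using add by (intro hm_add[OF S]) auto
    thus ?case by simp
  next
    case (lim f s)
    show ?case
    proof (rule hm_approx[OF S])
      show "integrable \<mu> (\<lambda>x. complex_of_real (f x))" using lim by auto
      fix e :: real assume e: "e > 0"
      have conv: "(\<lambda>i. \<integral>x. \<bar>f x - s i x\<bar> \<partial>\<mu>) \<longlonglongrightarrow> (\<integral>x. 0 \<partial>\<mu>)"
      proof (rule integral_dominated_convergence[where w="\<lambda>x. 3 * \<bar>f x\<bar>"])
        show "(\<lambda>x. 0::real) \<in> borel_measurable \<mu>" by simp
        show "(\<lambda>x. \<bar>f x - s i x\<bar>) \<in> borel_measurable \<mu>" for i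
          using borel_measurable_integrable[OF lim(1)[of i]] borel_measurable_integrable[OF lim(5)] by measurable
        show "integrable \<mu> (\<lambda>x. 3 * \<bar>f x\<bar>)" using lim(5) by auto
        show "AE x in \<mu>. (\<lambda>i. \<bar>f x - s i x\<bar>) \<longlonglongrightarrow> 0"
        proof (rule AE_I2)
          fix x assume x: "x \<in> space \<mu>"
          have "(\<lambda>i. f x - s i x) \<longlonglongrightarrow> f x - f x" by (intro tendsto_diff tendsto_const lim(3)[OF x])
          hence "(\<lambda>i. \<bar>f x - s i x\<bar>) \<longlonglongrightarrow> \<bar>f x - f x\<bar>" by (rule tendsto_rabs)
          thus "(\<lambda>i. \<bar>f x - s i x\<bar>) \<longlonglongrightarrow> 0" by simp
        qed
        show "AE x in \<mu>. norm \<bar>f x - s i x\<bar> \<le> 3 * \<bar>f x\<bar>" for i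
        proof (rule AE_I2)
          fix x assume x: "x \<in> space \<mu>"
          show "norm \<bar>f x - s i x\<bar> \<le> 3 * \<bar>f x\<bar>" using lim(4)[OF x, of i] by simp
        qed
      qed
      from order_tendstoD(2)[OF conv, of e] e obtain i where i: "(\<integral>x. \<bar>f x - s i x\<bar> \<partial>\<mu>) < e"
        by (auto simp: eventually_sequentially)
      have "(\<integral>x. cmod (complex_of_real (f x) - complex_of_real (s i x)) \<partial>\<mu>) = (\<integral>x. \<bar>f x - s i x\<bar> \<partial>\<mu>)"
        by (simp add: of_real_diff[symmetric] del: of_real_diff)
      thus "\<exists>g. integrable \<mu> g \<and> hm \<mu> g \<and> (\<integral>x. cmod (complex_of_real (f x) - g x) \<partial>\<mu>) < e"
        using lim(1,2) i by (intro exI[of _ "\<lambda>x. complex_of_real (s i x)"]) auto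
    qed
  qed
  show ?thesis unfolding harmonically_mixing_def
  proof (intro allI impI)
    fix \<epsilon> :: real assume e: "\<epsilon> > 0"
    obtain R where R: "\<And>c. (\<forall>n. character (c n)) \<and> finite (char_support c) \<and> char_rank c > R \<Longrightarrow>
        cmod (\<integral>x. complex_of_real (D x) * seq_char c x \<partial>\<mu>) < \<epsilon>"
      using hD e unfolding hm_def by meson
    show "\<exists>R. \<forall>c. (\<forall>n. character (c n)) \<and> finite (char_support c) \<and> R < char_rank c \<longrightarrow> cmod (\<integral>x. seq_char c x \<partial>\<nu>) < \<epsilon>"
    proof (intro exI[of _ R] allI impI)
      fix c :: "int \<Rightarrow> 'a \<Rightarrow> complex"
      assume H: "(\<forall>n. character (c n)) \<and> finite (char_support c) \<and> R < char_rank c"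
      have "(\<integral>x. seq_char c x \<partial>\<nu>) = (\<integral>x. D x *\<^sub>R seq_char c x \<partial>\<mu>)"
        using integral_density[OF seq_char_meas[OF S] Dm, of c] Dnn dens by simp
      also have "\<dots> = (\<integral>x. complex_of_real (D x) * seq_char c x \<partial>\<mu>)" by (simp add: scaleR_conv_of_real)
      finally show "cmod (\<integral>x. seq_char c x \<partial>\<nu>) < \<epsilon>" using R[OF H] by simp
    qed
  qed
qed


end
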